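(* Let $v,\widetilde v,w\in\mathbb{R}^n$ and let $M\in\mathbb{R}^{n\times n}$ be symmetric. Let $S=\operatorname{supp}(\widetilde v-v)$, $\partial S=\operatorname{supp}(w-\widetilde v)$, $S^{\mathrm{new}}=\operatorname{supp}(w-v)$, $S'=(S\cup\partial S)\setminus S^{\mathrm{new}}$, $\Delta=\widetilde V-V$, $\Delta^{\mathrm{new}}=W-V$, and $$N=\mathcal L_*\big[(\Delta^{\mathrm{new}}_{S^{\mathrm{new}},S^{\mathrm{new}}})^{-1}+M_{S^{\mathrm{new}},S^{\mathrm{new}}}\big]-\mathcal L_*\big[\Delta_{S,S}^{-1}+M_{S,S}\big].$$ Then every nonzero entry of $N$ lies in $(S\setminus\partial S)\times\partial S$, $\partial S\times(S\setminus\partial S)$ or $\partial S\times\partial S$. Moreover: $N_{S\setminus\partial S,\ \partial S\setminus S}=M_{S\setminus\partial S,\ \partial S\setminus S}$; $N_{S\setminus\partial S,\ S'}=-M_{S\setminus\partial S,\ S'}$; and $N_{S\setminus\partial S,\ (S\cap\partial S)\setminus S'}=0$.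
   Context: For $u\in\mathbb{R}^n$, $U=\operatorname{diag}(u)$ (so $V,\widetilde V,W$ are the diagonal matrices of $v,\widetilde v,w$). $\operatorname{supp}(u)=\{i:u_i\ne0\}$. For a matrix $X$ and index sets $I,J$, $X_{I,J}$ is the submatrix with rows $I$ and columns $J$. For $T\subseteq[n]$ and a matrix $K$ with rows and columns indexed by $T$, $\mathcal L_*[K]$ denotes the matrix indexed by $[n]\times[n]$ that equals $K$ on $T\times T$, has entry $1$ on each diagonal position $(i,i)$ with $i\notin T$, and $0$ elsewhere (the same index $i\in[n]$ occupies the same position in every such embedding). Note $\Delta_{S,S}$ and $\Delta^{\mathrm{new}}_{S^{\mathrm{new}},S^{\mathrm{new}}}$ are invertible diagonal matrices. *)

theory Defs
  imports "HOL-Analysis.Analysis"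
begin

definition supp :: "real^'n \<Rightarrow> 'n set" where
  "supp u = {i. u $ i \<noteq> 0}"

definition diagm :: "real^'n \<Rightarrow> real^'n^'n" where
  "diagm u = (\<chi> i j. if i = j then u $ i else 0)"

text \<open>A matrix indexed by T x T is represented by a function 'n => 'n => real,
  of which only the entries on T x T are meaningful.
  The principal submatrix X_{T,T} of a full matrix X.\<close>
definition subm :: "real^'n^'n \<Rightarrow> 'n set \<Rightarrow> ('n \<Rightarrow> 'n \<Rightarrow> real)" where
  "subm X T = (\<lambda>i j. if i \<in> T \<and> j \<in> T then X $ i $ j else 0)"

definition sub_inv :: "'n set \<Rightarrow> ('n \<Rightarrow> 'n \<Rightarrow> real) \<Rightarrow> ('n \<Rightarrow> 'n \<Rightarrow> real)" where
  "sub_inv T K = (THE K'. (\<forall>i\<in>T. \<forall>j\<in>T. (\<Sum>k\<in>T. K i k * K' k j) = (if i = j then 1 else 0))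
                        \<and> (\<forall>i j. i \<notin> T \<or> j \<notin> T \<longrightarrow> K' i j = 0))"

definition Lstar :: "'n set \<Rightarrow> ('n \<Rightarrow> 'n \<Rightarrow> real) \<Rightarrow> real^'n^'n" where
  "Lstar T K = (\<chi> i j. if i \<in> T \<and> j \<in> T then K i j else if i = j then 1 else 0)"

end

theory Submission
  imports Defs
begin

lemma sub_inv_diag:
  fixes T :: "'n::finite set" and K :: "'n \<Rightarrow> 'n \<Rightarrow> real"
  assumes nz: "\<forall>i\<in>T. K i i \<noteq> 0" and od: "\<forall>i\<in>T. \<forall>j\<in>T. i \<noteq> j \<longrightarrow> K i j = 0"
  shows "sub_inv T K = (\<lambda>i j. if i \<in> T \<and> j \<in> T \<and> i = j then 1 / K i i else 0)"
proof -
  have sumK: "(\<Sum>k\<in>T. K i k * K' k j) = K i i * K' i j" if "i \<in> T" for i j and K' :: "'n \<Rightarrow> 'n \<Rightarrow> real"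
  proof -
    have "(\<Sum>k\<in>T. K i k * K' k j) = (\<Sum>k\<in>T. if k = i then K i i * K' i j else 0)"
      by (rule sum.cong) (use od that in auto)
    also have "\<dots> = K i i * K' i j" using that by (simp add: sum.delta')
    finally show ?thesis .
  qed
  show ?thesis unfolding sub_inv_def
  proof (rule the_equality)
    show "(\<forall>i\<in>T. \<forall>j\<in>T. (\<Sum>k\<in>T. K i k * (if k \<in> T \<and> j \<in> T \<and> k = j then 1 / K k k else 0)) = (if i = j then 1 else 0))
       \<and> (\<forall>i j. i \<notin> T \<or> j \<notin> T \<longrightarrow> (if i \<in> T \<and> j \<in> T \<and> i = j then 1 / K i i else 0) = 0)"
    proof (intro conjI ballI allI impI)
      fix i j assume "i \<in> T" "j \<in> T"
      then show "(\<Sum>k\<in>T. K i k * (if k \<in> T \<and> j \<in> T \<and> k = j then 1 / K k k else 0)) = (if i = j then 1 else 0)"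
        using sumK[of i "\<lambda>k j. if k \<in> T \<and> j \<in> T \<and> k = j then 1 / K k k else 0" j] nz by auto
    qed auto
  next
    fix K' assume h: "(\<forall>i\<in>T. \<forall>j\<in>T. (\<Sum>k\<in>T. K i k * K' k j) = (if i = j then 1 else 0))
       \<and> (\<forall>i j. i \<notin> T \<or> j \<notin> T \<longrightarrow> K' i j = 0)"
    show "K' = (\<lambda>i j. if i \<in> T \<and> j \<in> T \<and> i = j then 1 / K i i else 0)"
    proof (intro ext)
      fix i j
      show "K' i j = (if i \<in> T \<and> j \<in> T \<and> i = j then 1 / K i i else 0)"
      proof (cases "i \<in> T \<and> j \<in> T")
        case True
        then have "K i i * K' i j = (if i = j then 1 else 0)" using h sumK by metis
        then show ?thesis using True nz by (auto simp: field_simps)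
      next
        case False then show ?thesis using h by auto
      qed
    qed
  qed
qed

theorem lemmaA5:
  fixes v vt w :: "real^'n" and M :: "real^'n^'n"
    and S dS Snew S' :: "'n set" and \<Delta> \<Delta>new N :: "real^'n^'n"
  assumes symM: "transpose M = M"
    and S_def: "S = supp (vt - v)"
    and dS_def: "dS = supp (w - vt)"
    and Snew_def: "Snew = supp (w - v)"
    and S'_def: "S' = (S \<union> dS) - Snew"
    and \<Delta>_def: "\<Delta> = diagm vt - diagm v"
    and \<Delta>new_def: "\<Delta>new = diagm w - diagm v"
    and N_def: "N = Lstar Snew (\<lambda>i j. sub_inv Snew (subm \<Delta>new Snew) i j + subm M Snew i j)
                  - Lstar S (\<lambda>i j. sub_inv S (subm \<Delta> S) i j + subm M S i j)"
  shows "(\<forall>i j. N $ i $ j \<noteq> 0 \<longrightarrow>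
            (i \<in> S - dS \<and> j \<in> dS) \<or> (i \<in> dS \<and> j \<in> S - dS) \<or> (i \<in> dS \<and> j \<in> dS))
       \<and> (\<forall>i \<in> S - dS. \<forall>j \<in> dS - S. N $ i $ j = M $ i $ j)
       \<and> (\<forall>i \<in> S - dS. \<forall>j \<in> S'. N $ i $ j = - M $ i $ j)
       \<and> (\<forall>i \<in> S - dS. \<forall>j \<in> (S \<inter> dS) - S'. N $ i $ j = 0)"
proof -
  have I1: "sub_inv Snew (subm \<Delta>new Snew) = (\<lambda>i j. if i \<in> Snew \<and> j \<in> Snew \<and> i = j then 1 / (w$i - v$i) else 0)"
    by (subst sub_inv_diag) (auto intro!: ext simp: subm_def \<Delta>new_def diagm_def Snew_def supp_def)
  have I2: "sub_inv S (subm \<Delta> S) = (\<lambda>i j. if i \<in> S \<and> j \<in> S \<and> i = j then 1 / (vt$i - v$i) else 0)"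
    by (subst sub_inv_diag) (auto intro!: ext simp: subm_def \<Delta>_def diagm_def S_def supp_def)
  have N: "N $ i $ j = (if i \<in> Snew \<and> j \<in> Snew then (if i = j then 1 / (w$i - v$i) else 0) + M$i$j
                        else if i = j then 1 else 0)
                     - (if i \<in> S \<and> j \<in> S then (if i = j then 1 / (vt$i - v$i) else 0) + M$i$j
                        else if i = j then 1 else 0)" for i j
    unfolding N_def I1 I2 by (simp add: Lstar_def subm_def)
  have mem: "\<And>i. i \<in> S \<longleftrightarrow> vt$i \<noteq> v$i" "\<And>i. i \<in> dS \<longleftrightarrow> w$i \<noteq> vt$i"
    "\<And>i. i \<in> Snew \<longleftrightarrow> w$i \<noteq> v$i"
    by (auto simp: S_def dS_def Snew_def supp_def)
  show ?thesis
    unfolding S'_def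
    by (intro conjI allI ballI impI; unfold N Diff_iff Int_iff Un_iff mem; auto)
      (smt (verit))+
qed

end
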